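(* Let $1\le k<n$ and let $P\in\mathbb{H}_n$ be a rank-$k$ orthogonal projection. Then $S^{\mathbb{H}}(P)$ is a convex cone with real affine dimension $k^2+(n-k)^2$. Moreover, with respect to the decomposition $\mathbb{C}^n=\operatorname{Ran}P\oplus\operatorname{Ker}P$, $$S^{\mathbb{H}}(P)=\left\{\begin{pmatrix}B_{11}&0\\0&B_{22}\end{pmatrix}: B_{11}\in\mathbb{H}_k,\ B_{22}\in\mathbb{H}_{n-k},\ \operatorname{tr}B_{11}=w_k(B)\right\},$$ and $\operatorname{span}_{\mathbb{R}}S^{\mathbb{H}}(P)=\mathbb{H}_k\oplus\mathbb{H}_{n-k}$.
   Context: $\mathbb{H}_n$ is the real space of $n\times n$ Hermitian matrices. $w_k(A)=\max\{|\operatorname{tr}(AP)|: P=P^*=P^2,\operatorname{tr}P=k\}$. For a rank-$k$ orthogonal projection $P$, $S^{\mathbb{H}}(P)=\{B\in\mathbb{H}_n:\operatorname{tr}(BP)=w_k(B)\}$. A convex cone is closed under nonnegative real linear combinations; its real affine dimension is the real dimension of its real span. *)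

theory Defs
  imports "HOL-Analysis.Analysis"
begin

text \<open>n x n complex matrices, n = CARD('n); viewed as a real vector space via scaleR.\<close>

definition cadj :: "complex^'n^'n \<Rightarrow> complex^'n^'n" where
  "cadj A = (\<chi> i j. cnj (A $ j $ i))"

definition hermitian :: "complex^'n^'n \<Rightarrow> bool" where
  "hermitian A \<longleftrightarrow> cadj A = A"

definition Herm :: "(complex^'n^'n) set" where
  "Herm = {A. hermitian A}"

definition orth_proj :: "complex^'n^'n \<Rightarrow> bool" where
  "orth_proj P \<longleftrightarrow> cadj P = P \<and> P ** P = P"

definition wk :: "nat \<Rightarrow> complex^'n^'n \<Rightarrow> real" where
  "wk k A = Sup {cmod (trace (A ** Q)) | Q. orth_proj Q \<and> trace Q = of_nat k}"

definition SH :: "nat \<Rightarrow> complex^'n^'n \<Rightarrow> (complex^'n^'n) set" where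
  "SH k P = {B \<in> Herm. trace (B ** P) = complex_of_real (wk k B)}"

end

theory Submission
  imports Defs
begin

definition cinner :: "complex^'n \<Rightarrow> complex^'n \<Rightarrow> complex" where
  "cinner x y = (\<Sum>i\<in>UNIV. cnj (x$i) * y$i)"
definition outer :: "complex^'n \<Rightarrow> complex^'n \<Rightarrow> complex^'n^'n" where
  "outer x y = (\<chi> i j. x$i * cnj (y$j))"
definition csc :: "complex \<Rightarrow> complex^'n^'n \<Rightarrow> complex^'n^'n" where
  "csc c A = (\<chi> i j. c * A$i$j)"
definition nsq :: "complex^'n \<Rightarrow> real" where
  "nsq x = (\<Sum>i\<in>UNIV. (cmod (x$i))^2)"

lemma cadj_cadj[simp]: "cadj (cadj A) = A"
  by (simp add: cadj_def vec_eq_iff)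
lemma cadj_mult: "cadj (A ** B) = cadj B ** cadj A"
  by (simp add: cadj_def vec_eq_iff matrix_matrix_mult_def mult.commute)
lemma cadj_add: "cadj (A + B) = cadj A + cadj B"
  by (simp add: cadj_def vec_eq_iff)
lemma cadj_diff: "cadj (A - B) = cadj A - cadj B"
  by (simp add: cadj_def vec_eq_iff)
lemma cadj_scaleR: "cadj (r *\<^sub>R A) = r *\<^sub>R cadj A"
  by (simp add: cadj_def vec_eq_iff)
lemma cadj_csc: "cadj (csc c A) = csc (cnj c) (cadj A)"
  by (simp add: cadj_def csc_def vec_eq_iff)
lemma cadj_outer: "cadj (outer x y) = outer y x"
  by (simp add: cadj_def outer_def vec_eq_iff)
lemma cadj_zero[simp]: "cadj 0 = 0"
  by (simp add: cadj_def vec_eq_iff)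
lemma cadj_mat[simp]: "cadj (mat 1) = mat 1"
  by (simp add: cadj_def vec_eq_iff mat_def)
lemma cadj_sum: "cadj (sum f S) = sum (\<lambda>i. cadj (f i)) S"
  by (induct S rule: infinite_finite_induct) (auto simp: cadj_add)

lemma cinner_adj: "cinner (A *v x) y = cinner x (cadj A *v y)"
proof -
  have "cinner (A *v x) y = (\<Sum>i\<in>UNIV. \<Sum>j\<in>UNIV. cnj (A$i$j) * cnj (x$j) * y$i)"
    by (simp add: cinner_def matrix_vector_mult_def sum_distrib_right)
  also have "\<dots> = (\<Sum>j\<in>UNIV. \<Sum>i\<in>UNIV. cnj (A$i$j) * cnj (x$j) * y$i)"
    by (rule sum.swap)
  also have "\<dots> = cinner x (cadj A *v y)"
    by (simp add: cinner_def cadj_def matrix_vector_mult_def sum_distrib_left mult_ac)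
  finally show ?thesis .
qed
lemma cinner_herm: "cadj A = A \<Longrightarrow> cinner x (A *v y) = cinner (A *v x) y"
  by (simp add: cinner_adj)
lemma cinner_cnj: "cinner y x = cnj (cinner x y)"
  by (simp add: cinner_def mult.commute)
lemma cinner_add_right: "cinner x (y + z) = cinner x y + cinner x z"
  by (simp add: cinner_def distrib_left sum.distrib)
lemma cinner_add_left: "cinner (x + y) z = cinner x z + cinner y z"
  by (simp add: cinner_def distrib_right sum.distrib)
lemma cinner_diff_right: "cinner x (y - z) = cinner x y - cinner x z"
  by (simp add: cinner_def right_diff_distrib sum_subtractf)
lemma cinner_diff_left: "cinner (x - y) z = cinner x z - cinner y z"
  by (simp add: cinner_def left_diff_distrib sum_subtractf)
lemma cinner_smult_right: "cinner x (c *s y) = c * cinner x y"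
  by (simp add: cinner_def sum_distrib_left mult_ac)
lemma cinner_smult_left: "cinner (c *s x) y = cnj c * cinner x y"
  by (simp add: cinner_def sum_distrib_left mult_ac)
lemma cinner_zero[simp]: "cinner x 0 = 0" "cinner 0 x = 0"
  by (simp_all add: cinner_def)
lemma cinner_sum_right: "cinner x (sum f S) = (\<Sum>i\<in>S. cinner x (f i))"
  by (induct S rule: infinite_finite_induct) (auto simp: cinner_add_right)
lemma cinner_sum_left: "cinner (sum f S) x = (\<Sum>i\<in>S. cinner (f i) x)"
  by (induct S rule: infinite_finite_induct) (auto simp: cinner_add_left)

lemma cinner_self: "cinner x x = complex_of_real (nsq x)"
proof -
  have "cinner x x = (\<Sum>i\<in>UNIV. complex_of_real ((cmod (x$i))^2))"
    unfolding cinner_def by (rule sum.cong) (auto simp: complex_norm_square mult.commute simp del: of_real_power)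
  then show ?thesis by (simp add: nsq_def)
qed
lemma nsq_nonneg: "nsq x \<ge> 0" by (simp add: nsq_def sum_nonneg)
lemma nsq_eq_0: "nsq x = 0 \<longleftrightarrow> x = 0"
  by (simp add: nsq_def sum_nonneg_eq_0_iff vec_eq_iff)

lemma outer_apply: "outer x y *v z = cinner y z *s x"
  by (simp add: outer_def cinner_def matrix_vector_mult_def vec_eq_iff sum_distrib_left mult_ac)
lemma csc_apply: "csc c A *v z = c *s (A *v z)"
  by (simp add: csc_def matrix_vector_mult_def vec_eq_iff sum_distrib_left mult_ac)
lemma mv_smult: "A *v (c *s x) = c *s (A *v (x::complex^'n))"
  by (simp add: matrix_vector_mult_def vec_eq_iff sum_distrib_left mult_ac)
lemma cscaleR: "r *\<^sub>R (z::complex) = complex_of_real r * z"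
  by (simp add: scaleR_conv_of_real)
lemma scaleR_comp[simp]: "(r *\<^sub>R (A::complex^'n^'m))$i$j = complex_of_real r * A$i$j"
  by (simp add: cscaleR)
lemma scaleR_apply: "(r *\<^sub>R A) *v z = complex_of_real r *s (A *v (z::complex^'n))"
  by (simp add: matrix_vector_mult_def vec_eq_iff sum_distrib_left mult_ac cscaleR)
lemma sum_apply: "(sum f S) *v z = (\<Sum>i\<in>S. f i *v z)"
  by (induct S rule: infinite_finite_induct) (auto simp: matrix_vector_mult_add_rdistrib)

lemma trace_outer: "trace (A ** outer x y) = cinner y (A *v x)"
  by (simp add: trace_def outer_def cinner_def matrix_matrix_mult_def matrix_vector_mult_def
      sum_distrib_left mult_ac)
lemma trace_outer1: "trace (outer x y) = cinner y x"
  using trace_outer[of "mat 1" x y] by simp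

lemma trace_csc: "trace (csc c A) = c * trace A"
  by (simp add: trace_def csc_def sum_distrib_left)
lemma mult_csc: "A ** csc c B = csc c (A ** B)"
  by (simp add: csc_def matrix_matrix_mult_def vec_eq_iff sum_distrib_left mult_ac)
lemma trace_scaleR: "trace (r *\<^sub>R A) = complex_of_real r * trace (A::complex^'n^'n)"
  by (simp add: trace_def sum_distrib_left cscaleR)
lemma mult_scaleR: "(A::complex^'n^'n) ** (r *\<^sub>R B) = r *\<^sub>R (A ** B)"
  by (simp add: matrix_matrix_mult_def vec_eq_iff sum_distrib_left mult_ac cscaleR)
lemma trace_sum: "trace (sum f S) = (\<Sum>i\<in>S. trace (f i))"
  by (induct S rule: infinite_finite_induct) (auto simp: trace_def sum.distrib)
lemma mult_sum: "(A::complex^'n^'n) ** sum f S = (\<Sum>i\<in>S. A ** f i)"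
  by (induct S rule: infinite_finite_induct) (auto simp: matrix_add_ldistrib)

lemma mv_axis: "(A *v axis j 1)$i = (A$i$j :: complex)"
proof -
  have "(A *v axis j 1)$i = (\<Sum>ia\<in>UNIV. if ia = j then A$i$j else 0)"
    unfolding matrix_vector_mult_def vec_lambda_beta by (rule sum.cong) (auto simp: axis_def)
  then show ?thesis by simp
qed
lemma cinner_axis: "cinner (axis i 1) y = y$i"
proof -
  have "cinner (axis i 1) y = (\<Sum>ia\<in>UNIV. if ia = i then y$i else 0)"
    unfolding cinner_def by (rule sum.cong) (auto simp: axis_def)
  then show ?thesis by simp
qed

lemma proj_idem_v: "orth_proj Q \<Longrightarrow> Q *v (Q *v x) = Q *v x"
  by (simp add: orth_proj_def matrix_vector_mul_assoc)

lemma proj_quad: "orth_proj Q \<Longrightarrow> cinner x (Q *v x) = complex_of_real (nsq (Q *v x))"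
proof -
  assume Q: "orth_proj Q"
  have "cinner x (Q *v x) = cinner x (Q *v (Q *v x))" using proj_idem_v[OF Q] by simp
  also have "\<dots> = cinner (Q *v x) (Q *v x)"
    using Q by (simp add: cinner_adj[symmetric] orth_proj_def cinner_herm)
  finally show ?thesis by (simp add: cinner_self)
qed

lemma proj_nsq_le: "orth_proj Q \<Longrightarrow> nsq (Q *v x) \<le> nsq x"
proof -
  assume Q: "orth_proj Q"
  let ?y = "Q *v x" and ?z = "x - Q *v x"
  have h: "cadj Q = Q" using Q by (simp add: orth_proj_def)
  have c1: "cinner ?y ?z = 0"
    by (simp add: cinner_adj h cinner_diff_right proj_idem_v[OF Q])
  have c2: "cinner ?z ?y = 0" using c1 by (simp add: cinner_cnj[of ?z])
  have eq: "cinner (?y + ?z) (?y + ?z) = cinner ?y ?y + cinner ?z ?z"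
    by (simp only: cinner_add_left cinner_add_right c1 c2) simp
  have "?y + ?z = x" by simp
  with eq have "cinner x x = cinner ?y ?y + cinner ?z ?z" by simp
  then have "complex_of_real (nsq x) = complex_of_real (nsq ?y + nsq ?z)" by (simp add: cinner_self)
  then have "nsq x = nsq ?y + nsq ?z" by (simp only: of_real_eq_iff)
  then show ?thesis using nsq_nonneg[of ?z] by linarith
qed

lemma nsq_ge_comp: "(cmod (x$i))^2 \<le> nsq x"
  unfolding nsq_def by (rule member_le_sum) auto

lemma nsq_axis: "nsq (axis j (1::complex)) = 1"
proof -
  have "nsq (axis j (1::complex)) = (\<Sum>ia\<in>UNIV. if ia = j then 1 else 0)"
    unfolding nsq_def by (rule sum.cong) (auto simp: axis_def)
  then show ?thesis by simp
qed

lemma proj_entry_le: "orth_proj Q \<Longrightarrow> cmod (Q$i$j) \<le> 1"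
proof -
  assume Q: "orth_proj Q"
  have "(cmod (Q$i$j))^2 \<le> 1"
    using nsq_ge_comp[of "Q *v axis j 1" i] proj_nsq_le[OF Q, of "axis j 1"]
    by (simp add: mv_axis nsq_axis)
  then show ?thesis by (simp add: power_le_one_iff abs_le_square_iff[symmetric])
qed

lemma trace_bound: "orth_proj Q \<Longrightarrow> cmod (trace (B ** Q)) \<le> (\<Sum>i\<in>UNIV. \<Sum>j\<in>UNIV. cmod (B$i$j))"
proof -
  assume Q: "orth_proj Q"
  have "cmod (trace (B ** Q)) = cmod (\<Sum>i\<in>UNIV. \<Sum>j\<in>UNIV. B$i$j * Q$j$i)"
    by (simp add: trace_def matrix_matrix_mult_def)
  also have "\<dots> \<le> (\<Sum>i\<in>UNIV. cmod (\<Sum>j\<in>UNIV. B$i$j * Q$j$i))" by (rule norm_sum)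
  also have "\<dots> \<le> (\<Sum>i\<in>UNIV. \<Sum>j\<in>UNIV. cmod (B$i$j * Q$j$i))"
    by (intro sum_mono norm_sum)
  also have "\<dots> \<le> (\<Sum>i\<in>UNIV. \<Sum>j\<in>UNIV. cmod (B$i$j))"
    by (intro sum_mono) (auto simp: norm_mult intro: mult_left_le proj_entry_le[OF Q])
  finally show ?thesis .
qed

lemma trace_as_sum: "trace (A::complex^'n^'n) = (\<Sum>j\<in>UNIV. cinner (axis j 1) (A *v axis j 1))"
  by (simp add: trace_def cinner_axis mv_axis)

lemma proj_trace0: "orth_proj P \<Longrightarrow> trace P = 0 \<Longrightarrow> P = 0"
proof -
  assume P: "orth_proj P" and t: "trace P = 0"
  have "trace P = complex_of_real (\<Sum>j\<in>UNIV. nsq (P *v axis j 1))"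
    by (simp add: trace_as_sum proj_quad[OF P])
  with t have "(\<Sum>j\<in>UNIV. nsq (P *v axis j 1)) = 0" by (metis of_real_eq_0_iff)
  then have "\<forall>j. nsq (P *v axis j 1) = 0" by (simp add: sum_nonneg_eq_0_iff nsq_nonneg)
  then have "\<forall>j. P *v axis j 1 = 0" by (simp add: nsq_eq_0)
  then show "P = 0" by (simp add: vec_eq_iff) (metis mv_axis zero_index)
qed

definition orthonormal_on :: "nat set \<Rightarrow> (nat \<Rightarrow> complex^'n) \<Rightarrow> bool" where
  "orthonormal_on S u \<longleftrightarrow> (\<forall>i\<in>S. \<forall>j\<in>S. cinner (u i) (u j) = (if i = j then 1 else 0))"

lemma sum_outer_apply:
  assumes "orthonormal_on S u" "finite S" "i \<in> S"
  shows "(\<Sum>l\<in>S. outer (u l) (u l)) *v u i = u i"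
proof -
  have "(\<Sum>l\<in>S. outer (u l) (u l)) *v u i = (\<Sum>l\<in>S. (if l = i then 1 else 0) *s u l)"
    using assms(1,3) by (auto simp: sum_apply outer_apply orthonormal_on_def intro!: sum.cong)
  also have "\<dots> = (\<Sum>l\<in>S. if l = i then u i else 0)"
    by (rule sum.cong) auto
  also have "\<dots> = u i" using assms(2,3) by simp
  finally show ?thesis .
qed

lemma outer_smult_l: "outer (c *s x) y = csc c (outer x y)"
  by (simp add: outer_def csc_def vec_eq_iff mult_ac)

lemma proj_decomp:
  "orth_proj P \<Longrightarrow> trace P = of_nat m \<Longrightarrow>
    \<exists>u. orthonormal_on {..<m} u \<and> P = (\<Sum>i<m. outer (u i) (u i))"
proof (induction m arbitrary: P)
  case 0
  then show ?case using proj_trace0 by (auto simp: orthonormal_on_def)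
next
  case (Suc m)
  have P: "orth_proj P" by fact
  have h: "cadj P = P" "P ** P = P" using P by (auto simp: orth_proj_def)
  have "(of_nat (Suc m)::complex) \<noteq> 0" by (rule of_nat_neq_0)
  then have "P \<noteq> 0" using Suc.prems by (auto simp: trace_def)
  then obtain i j where ij: "P$i$j \<noteq> 0" by (auto simp: vec_eq_iff)
  define x where "x = P *v axis j 1"
  have "x \<noteq> 0" using ij by (auto simp: x_def vec_eq_iff mv_axis)
  then have nx: "nsq x > 0" using nsq_nonneg[of x] nsq_eq_0[of x] by linarith
  define y where "y = complex_of_real (1 / sqrt (nsq x)) *s x"
  have Px: "P *v x = x" unfolding x_def by (rule proj_idem_v[OF P])
  have Py: "P *v y = y" by (simp add: y_def mv_smult Px)
  have yy: "cinner y y = 1"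
  proof -
    define a where "a = 1 / sqrt (nsq x)"
    have s: "sqrt (nsq x) * sqrt (nsq x) = nsq x" using nsq_nonneg[of x] by simp
    have "a * a * nsq x = nsq x / (sqrt (nsq x) * sqrt (nsq x))" by (simp add: a_def)
    then have a1: "a * a * nsq x = 1" using nx by (simp only: s) simp
    have "cinner y y = cnj (complex_of_real a) * (complex_of_real a * cinner x x)"
      unfolding y_def a_def by (simp only: cinner_smult_left cinner_smult_right mult_ac)
    also have "\<dots> = complex_of_real (a * a * nsq x)"
      by (simp only: cinner_self complex_cnj_complex_of_real of_real_mult mult_ac)
    finally show ?thesis by (simp only: a1 of_real_1)
  qed
  define P' where "P' = P - outer y y"
  have h': "cadj P' = P'" by (simp add: P'_def cadj_diff cadj_outer h)
  have P'v: "P' *v z = P *v z - cinner y z *s y" for z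
    by (simp add: P'_def matrix_vector_mult_diff_rdistrib outer_apply)
  have "P' ** P' = P'"
  proof (subst matrix_eq, intro allI)
    fix z
    have c: "cinner y (P *v z) = cinner y z"
      using h Py by (metis cinner_herm)
    show "(P' ** P') *v z = P' *v z"
      by (simp add: matrix_vector_mul_assoc[symmetric] P'v matrix_vector_mult_diff_distrib
          mv_smult Py proj_idem_v[OF P] cinner_diff_right cinner_smult_right c yy)
  qed
  then have P'p: "orth_proj P'" using h' by (simp add: orth_proj_def)
  have "trace P' = of_nat m"
    using Suc.prems(2) by (simp add: P'_def trace_sub trace_outer1 yy)
  from Suc.IH[OF P'p this] obtain u where u: "orthonormal_on {..<m} u"
    and P'e: "P' = (\<Sum>i<m. outer (u i) (u i))" by blast
  define u' where "u' = u(m := y)"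
  have P'y: "P' *v y = 0" by (simp add: P'v Py yy)
  have Pu: "P' *v u i = u i" if "i < m" for i
    using sum_outer_apply[OF u _ ] that by (simp add: P'e)
  have ortho: "cinner (u i) y = 0" if "i < m" for i
  proof -
    have "cinner (u i) y = cinner (P' *v u i) y" using Pu[OF that] by simp
    also have "\<dots> = cinner (u i) (P' *v y)" using h' by (metis cinner_herm)
    finally show ?thesis by (simp add: P'y)
  qed
  have ortho2: "cinner y (u i) = 0" if "i < m" for i
    using ortho[OF that] by (metis cinner_cnj complex_cnj_zero)
  have "orthonormal_on {..<Suc m} u'"
    using u ortho ortho2 yy unfolding orthonormal_on_def u'_def
    by (auto simp: less_Suc_eq)
  moreover have "P = (\<Sum>i<Suc m. outer (u' i) (u' i))"
  proof -
    have "(\<Sum>i<m. outer (u' i) (u' i)) = P'" unfolding P'e u'_def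
      by (rule sum.cong) auto
    then show ?thesis by (simp add: u'_def P'_def)
  qed
  ultimately show ?case by blast
qed

lemma mm_add_r: "((A::complex^'n^'n) + B) ** C = A ** C + B ** C"
  by (simp add: matrix_matrix_mult_def vec_eq_iff distrib_right sum.distrib)
lemma mm_diff_r: "((A::complex^'n^'n) - B) ** C = A ** C - B ** C"
  by (simp add: matrix_matrix_mult_def vec_eq_iff left_diff_distrib sum_subtractf)
lemma mm_diff_l: "(C::complex^'n^'n) ** (A - B) = C ** A - C ** B"
  by (simp add: matrix_matrix_mult_def vec_eq_iff right_diff_distrib sum_subtractf)

lemma herm_add: "A \<in> Herm \<Longrightarrow> B \<in> Herm \<Longrightarrow> A + B \<in> Herm"
  by (simp add: Herm_def hermitian_def cadj_add)
lemma herm_scaleR: "A \<in> Herm \<Longrightarrow> c *\<^sub>R A \<in> Herm"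
  by (simp add: Herm_def hermitian_def cadj_scaleR)
lemma herm_0: "0 \<in> Herm"
  by (simp add: Herm_def hermitian_def)

lemma wk_bdd: "bdd_above {cmod (trace (B ** Q)) | Q. orth_proj Q \<and> trace Q = of_nat k}"
  by (rule bdd_aboveI[where M="\<Sum>i\<in>UNIV. \<Sum>j\<in>UNIV. cmod (B$i$j)"]) (auto intro: trace_bound)

lemma SH_iff:
  assumes P: "orth_proj P" "trace P = of_nat k"
  shows "B \<in> SH k P \<longleftrightarrow> B \<in> Herm \<and> Im (trace (B ** P)) = 0 \<and>
     (\<forall>Q. orth_proj Q \<and> trace Q = of_nat k \<longrightarrow> cmod (trace (B ** Q)) \<le> Re (trace (B ** P)))"
proof
  assume B: "B \<in> SH k P"
  then have e: "trace (B ** P) = complex_of_real (wk k B)" and H: "B \<in> Herm" by (auto simp: SH_def)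
  have "cmod (trace (B ** Q)) \<le> wk k B" if "orth_proj Q" "trace Q = of_nat k" for Q
    unfolding wk_def by (rule cSup_upper) (use that wk_bdd in auto)
  then show "B \<in> Herm \<and> Im (trace (B ** P)) = 0 \<and>
     (\<forall>Q. orth_proj Q \<and> trace Q = of_nat k \<longrightarrow> cmod (trace (B ** Q)) \<le> Re (trace (B ** P)))"
    using e H by auto
next
  assume R: "B \<in> Herm \<and> Im (trace (B ** P)) = 0 \<and>
     (\<forall>Q. orth_proj Q \<and> trace Q = of_nat k \<longrightarrow> cmod (trace (B ** Q)) \<le> Re (trace (B ** P)))"
  have le: "wk k B \<le> Re (trace (B ** P))"
    unfolding wk_def by (rule cSup_least) (use R P in auto)
  have "cmod (trace (B ** P)) \<le> wk k B"
    unfolding wk_def by (rule cSup_upper) (use P wk_bdd in auto)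
  moreover have "Re (trace (B ** P)) \<le> cmod (trace (B ** P))" by (rule complex_Re_le_cmod)
  ultimately have "wk k B = Re (trace (B ** P))" using le by linarith
  then have "trace (B ** P) = complex_of_real (wk k B)"
    using R by (simp add: complex_eq_iff)
  then show "B \<in> SH k P" using R by (simp add: SH_def)
qed

lemma SH_convex_cone:
  assumes P: "orth_proj P" "trace P = of_nat k"
  shows "convex_cone (SH k P)"
  unfolding convex_cone_iff
proof (intro conjI ballI allI impI)
  show "0 \<in> SH k P" unfolding SH_iff[OF P] by (simp add: herm_0 trace_def)
next
  fix x y assume x: "x \<in> SH k P" and y: "y \<in> SH k P"
  show "x + y \<in> SH k P"
    using x y unfolding SH_iff[OF P]
    apply (simp add: herm_add mm_add_r trace_add)
    apply (intro allI impI)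
    subgoal for Q
      using norm_triangle_ineq[of "trace (x ** Q)" "trace (y ** Q)"]
      by (smt (verit))
    done
next
  fix x and c :: real assume x: "x \<in> SH k P" and c: "0 \<le> c"
  have tr: "trace ((c *\<^sub>R x) ** Q) = complex_of_real c * trace (x ** Q)" for Q
    by (simp add: scalar_matrix_assoc[symmetric] trace_scaleR)
  show "c *\<^sub>R x \<in> SH k P"
    using x c unfolding SH_iff[OF P]
    by (auto simp: herm_scaleR tr norm_mult intro: mult_left_mono)
qed

lemma trace_csc_outer: "trace (B ** csc a (outer x x)) = a * cinner x (B *v x)"
  by (simp add: mult_csc trace_csc trace_outer)

lemma csc_outer_apply: "csc a (outer x y) *v z = (a * cinner y z) *s x"
  by (simp add: csc_apply outer_apply vector_smult_assoc)

lemma cadj_csc_outer_real: "cadj (csc (complex_of_real r) (outer x x)) = csc (complex_of_real r) (outer x x)"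
  by (simp add: cadj_csc cadj_outer)

lemma key_ineq:
  fixes N M A D C2 t :: real
  assumes N: "N > 0" and M: "M > 0" and C2: "C2 > 0"
    and t: "t = N / (\<bar>N * D - A * M\<bar> + 1)"
  shows "A / N < (A + 2 * t * C2 + t\<^sup>2 * C2 * D) / (N + t\<^sup>2 * C2 * M)"
proof -
  have tp: "t > 0" using N t by (simp add: add_pos_nonneg)
  have "t * (\<bar>N * D - A * M\<bar> + 1) = N" using t by simp
  then have tX: "t * \<bar>N * D - A * M\<bar> < N" using tp by (simp add: algebra_simps)
  have m: "- \<bar>N * D - A * M\<bar> \<le> N * D - A * M" by simp
  have "t * (- \<bar>N * D - A * M\<bar>) \<le> t * (N * D - A * M)"
    using tp by (intro mult_left_mono[OF m]) simp
  then have "- (t * \<bar>N * D - A * M\<bar>) \<le> t * (N * D - A * M)" by simp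
  then have pos: "0 < 2 * N + t * (N * D - A * M)" using tX N by linarith
  have Nw: "N + t\<^sup>2 * C2 * M > 0" using N M C2 by (simp add: add_pos_nonneg)
  have "A * (N + t\<^sup>2 * C2 * M) < N * (A + 2 * t * C2 + t\<^sup>2 * C2 * D)"
  proof -
    have "N * (A + 2 * t * C2 + t\<^sup>2 * C2 * D) - A * (N + t\<^sup>2 * C2 * M)
        = t * C2 * (2 * N + t * (N * D - A * M))"
      by (simp add: algebra_simps power2_eq_square)
    moreover have "t * C2 * (2 * N + t * (N * D - A * M)) > 0"
      using tp C2 pos by simp
    ultimately show ?thesis by linarith
  qed
  then show ?thesis using N Nw by (simp add: divide_less_eq less_divide_eq mult.commute)
qed

lemma SH_commute:
  assumes P: "orth_proj P" "trace P = of_nat k" and B: "B \<in> SH k P"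
  shows "B ** P = P ** B"
proof -
  have hP: "cadj P = P" "P ** P = P" using P by (auto simp: orth_proj_def)
  have hB: "cadj B = B" using B by (auto simp: SH_def Herm_def hermitian_def)
  have Bc: "B \<in> Herm \<and> Im (trace (B ** P)) = 0 \<and>
     (\<forall>Q. orth_proj Q \<and> trace Q = of_nat k \<longrightarrow> cmod (trace (B ** Q)) \<le> Re (trace (B ** P)))"
    using B SH_iff[OF P] by blast
  define C where "C = P ** B ** (mat 1 - P)"
  have C0: "C = 0"
  proof (rule ccontr)
    assume "C \<noteq> 0"
    then obtain i j where ij: "C$i$j \<noteq> 0" by (auto simp: vec_eq_iff)
    define u where "u = P *v axis i 1"
    define v where "v = axis j 1 - P *v axis j 1"
    define c where "c = cinner u (B *v v)"
    have "C$i$j = cinner (axis i 1) (C *v axis j 1)" by (simp add: cinner_axis mv_axis)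
    also have "\<dots> = cinner (axis i 1) (P *v (B *v v))"
      by (simp add: C_def v_def matrix_vector_mul_assoc[symmetric] matrix_vector_mult_diff_rdistrib)
    also have "\<dots> = c" unfolding c_def u_def by (simp add: cinner_adj hP)
    finally have c0: "c \<noteq> 0" using ij by simp
    have Pu: "P *v u = u" unfolding u_def by (rule proj_idem_v[OF P(1)])
    have Pv: "P *v v = 0" unfolding v_def by (simp add: matrix_vector_mult_diff_distrib proj_idem_v[OF P(1)])
    have uv: "cinner u v = 0"
    proof -
      have "cinner u v = cinner (P *v u) v" by (simp add: Pu)
      also have "\<dots> = cinner u (P *v v)" by (simp add: cinner_adj hP)
      finally show ?thesis by (simp add: Pv)
    qed
    have vu: "cinner v u = 0" using uv by (metis cinner_cnj complex_cnj_zero)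
    have "u \<noteq> 0" using c0 by (auto simp: c_def)
    then have N: "nsq u > 0" using nsq_nonneg[of u] nsq_eq_0[of u] by linarith
    have "v \<noteq> 0" using c0 by (auto simp: c_def)
    then have M: "nsq v > 0" using nsq_nonneg[of v] nsq_eq_0[of v] by linarith
    have C2: "(cmod c)\<^sup>2 > 0" using c0 by simp
    define A where "A = Re (cinner u (B *v u))"
    define D where "D = Re (cinner v (B *v v))"
    define t where "t = nsq u / (\<bar>nsq u * D - A * nsq v\<bar> + 1)"
    define s where "s = complex_of_real t * cnj c"
    define w where "w = u + s *s v"
    define Nw where "Nw = nsq u + t\<^sup>2 * (cmod c)\<^sup>2 * nsq v"
    have Nwp: "Nw > 0" using N M C2 by (simp add: Nw_def add_pos_nonneg)
    have cc: "c * cnj c = complex_of_real ((cmod c)\<^sup>2)" by (rule complex_norm_square[symmetric])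
    have ss: "cnj s * s = complex_of_real (t\<^sup>2 * (cmod c)\<^sup>2)"
    proof -
      have "cnj s * s = complex_of_real t * complex_of_real t * (c * cnj c)"
        by (simp add: s_def mult_ac)
      also have "\<dots> = complex_of_real (t\<^sup>2 * (cmod c)\<^sup>2)"
        by (simp only: cc of_real_mult[symmetric] power2_eq_square)
      finally show ?thesis .
    qed
    have ww: "cinner w w = complex_of_real Nw"
    proof -
      have "cinner w w = cinner u u + cnj s * s * cinner v v"
        unfolding w_def
        by (simp only: cinner_add_left cinner_add_right cinner_smult_left cinner_smult_right uv vu)
          (simp add: mult.assoc)
      also have "\<dots> = complex_of_real Nw"
        by (simp only: ss cinner_self Nw_def of_real_add of_real_mult)
      finally show ?thesis .
    qed
    have uw: "cinner u w = complex_of_real (nsq u)"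
      by (simp add: w_def cinner_add_right cinner_smult_right uv cinner_self)
    have Pw: "P *v w = u"
      by (simp add: w_def matrix_vector_right_distrib mv_smult Pu Pv)
    define R where "R = P - csc (complex_of_real (1 / nsq u)) (outer u u)"
    define Q where "Q = R + csc (complex_of_real (1 / Nw)) (outer w w)"
    have Nne: "complex_of_real (nsq u) \<noteq> 0" using N by simp
    have Nwne: "complex_of_real Nw \<noteq> 0" using Nwp by simp
    have hR: "cadj R = R" unfolding R_def by (simp only: cadj_diff cadj_csc_outer_real hP)
    have Rv: "R *v z = P *v z - (complex_of_real (1 / nsq u) * cinner u z) *s u" for z
      by (simp add: R_def matrix_vector_mult_diff_rdistrib csc_outer_apply)
    have cuP: "cinner u (P *v z) = cinner u z" for z
      using hP Pu by (metis cinner_herm)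
    have cuR: "cinner u (R *v z) = 0" for z
      using Nne by (simp add: Rv cinner_diff_right cinner_smult_right cuP cinner_self)
    have PR: "P *v (R *v z) = R *v z" for z
      by (simp add: Rv matrix_vector_mult_diff_distrib mv_smult Pu proj_idem_v[OF P(1)])
    have RR: "R *v (R *v z) = R *v z" for z
    proof -
      have "R *v (R *v z) = P *v (R *v z)"
        by (simp only: Rv[of "R *v z"] cuR mult_zero_right vector_smult_lzero diff_zero)
      then show ?thesis by (simp only: PR)
    qed
    have Rw: "R *v w = 0"
      using Nne by (simp add: Rv Pw uw)
    have wR: "cinner w (R *v z) = 0" for z
      using hR Rw by (metis cinner_herm cinner_zero(2))
    have hQ: "cadj Q = Q" unfolding Q_def by (simp only: cadj_add cadj_csc_outer_real hR)
    have Qv: "Q *v z = R *v z + (complex_of_real (1 / Nw) * cinner w z) *s w" for z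
      by (simp add: Q_def matrix_vector_mult_add_rdistrib csc_outer_apply)
    have QQ: "Q ** Q = Q"
    proof (subst matrix_eq, intro allI)
      fix z
      have a1: "cinner w (Q *v z) = (complex_of_real (1/Nw) * cinner w z) * complex_of_real Nw"
        by (simp only: Qv cinner_add_right cinner_smult_right wR ww) simp
      have a2: "R *v (Q *v z) = R *v z"
        by (simp only: Qv matrix_vector_right_distrib mv_smult RR Rw vector_smult_rzero add_0_right)
      have "(Q ** Q) *v z = R *v (Q *v z) + (complex_of_real (1 / Nw) * cinner w (Q *v z)) *s w"
        by (simp only: matrix_vector_mul_assoc[symmetric] Qv[of "Q *v z"])
      also have "\<dots> = R *v z + (complex_of_real (1 / Nw) * cinner w z) *s w"
        using Nwne by (simp only: a1 a2) simp
      also have "\<dots> = Q *v z" by (simp only: Qv)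
      finally show "(Q ** Q) *v z = Q *v z" .
    qed
    have Qp: "orth_proj Q" using hQ QQ by (simp add: orth_proj_def)
    have trQ: "trace Q = of_nat k"
      using Nne Nwne P(2)
      by (simp add: Q_def R_def trace_add trace_sub trace_csc trace_outer1 cinner_self[of u] ww)
    have trBQ: "trace (B ** Q) = trace (B ** P) - complex_of_real (1 / nsq u) * cinner u (B *v u)
         + complex_of_real (1 / Nw) * cinner w (B *v w)"
      by (simp add: Q_def R_def matrix_add_ldistrib mm_diff_l trace_add trace_sub trace_csc_outer)
    have cvu: "cinner v (B *v u) = cnj c"
      unfolding c_def using hB by (metis cinner_herm cinner_cnj)
    have wBw: "cinner w (B *v w) = cinner u (B *v u) + complex_of_real (2 * t * (cmod c)\<^sup>2)
        + complex_of_real (t\<^sup>2 * (cmod c)\<^sup>2) * cinner v (B *v v)"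
    proof -
      have "cinner w (B *v w) = cinner u (B *v u) + (s * c + cnj s * cnj c) + cnj s * s * cinner v (B *v v)"
        by (simp add: w_def matrix_vector_right_distrib mv_smult cinner_add_left cinner_add_right
            cinner_smult_left cinner_smult_right c_def[symmetric] cvu mult.assoc add_ac ring_distribs mult.left_commute)
      moreover have "s * c + cnj s * cnj c = complex_of_real (2 * t * (cmod c)\<^sup>2)"
      proof -
        have "s * c + cnj s * cnj c = 2 * complex_of_real t * (c * cnj c)"
          by (simp add: s_def mult_ac)
        also have "\<dots> = complex_of_real (2 * t * (cmod c)\<^sup>2)"
          by (simp only: cc of_real_mult of_real_numeral)
        finally show ?thesis .
      qed
      ultimately show ?thesis by (simp only: ss)
    qed
    have ReQ: "Re (trace (B ** Q)) = Re (trace (B ** P)) - A / nsq u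
        + (A + 2 * t * (cmod c)\<^sup>2 + t\<^sup>2 * (cmod c)\<^sup>2 * D) / Nw"
      by (simp add: trBQ wBw A_def D_def add_divide_distrib)
    have "A / nsq u < (A + 2 * t * (cmod c)\<^sup>2 + t\<^sup>2 * (cmod c)\<^sup>2 * D) / Nw"
      unfolding Nw_def by (rule key_ineq[OF N M C2]) (simp add: t_def)
    then have "Re (trace (B ** Q)) > Re (trace (B ** P))" using ReQ by linarith
    moreover have "Re (trace (B ** Q)) \<le> cmod (trace (B ** Q))" by (rule complex_Re_le_cmod)
    ultimately show False using Bc Qp trQ by force
  qed
  have e1: "P ** B = P ** B ** P"
    using C0 unfolding C_def by (simp add: mm_diff_l)
  have "cadj (P ** B) = cadj (P ** B ** P)" using e1 by simp
  then have "B ** P = P ** B ** P"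
    by (simp add: cadj_mult hP hB matrix_mul_assoc)
  then show ?thesis using e1 by simp
qed

definition fc :: "(nat \<Rightarrow> complex^'n) \<Rightarrow> nat \<Rightarrow> nat \<Rightarrow> complex^'n^'n \<Rightarrow> complex" where
  "fc U a b X = cinner (U a) (X *v U b)"
definition Mb :: "(nat \<Rightarrow> complex^'n) \<Rightarrow> nat \<times> nat \<Rightarrow> complex^'n^'n" where
  "Mb U p = (case p of (i,j) \<Rightarrow> if i = j then outer (U i) (U i)
     else if i < j then outer (U i) (U j) + outer (U j) (U i)
     else csc \<i> (outer (U j) (U i) - outer (U i) (U j)))"
definition gc :: "(nat \<Rightarrow> complex^'n) \<Rightarrow> nat \<times> nat \<Rightarrow> complex^'n^'n \<Rightarrow> real" where
  "gc U q X = (case q of (a,b) \<Rightarrow> if a \<le> b then Re (fc U a b X) else Im (fc U b a X))"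
definition Iset :: "nat \<Rightarrow> nat \<Rightarrow> (nat \<times> nat) set" where
  "Iset k n = {..<k} \<times> {..<k} \<union> {k..<n} \<times> {k..<n}"

lemma fc_outer:
  assumes "orthonormal_on S U" "a \<in> S" "b \<in> S" "i \<in> S" "j \<in> S"
  shows "fc U a b (outer (U i) (U j)) = (if a = i \<and> j = b then 1 else 0)"
  using assms by (simp add: fc_def outer_apply cinner_smult_right orthonormal_on_def)

lemma fc_add: "fc U a b (X + Y) = fc U a b X + fc U a b Y"
  by (simp add: fc_def matrix_vector_mult_add_rdistrib cinner_add_right)
lemma fc_diff: "fc U a b (X - Y) = fc U a b X - fc U a b Y"
  by (simp add: fc_def matrix_vector_mult_diff_rdistrib cinner_diff_right)
lemma fc_csc: "fc U a b (csc c X) = c * fc U a b X"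
  by (simp add: fc_def csc_apply cinner_smult_right)
lemma fc_scaleR: "fc U a b (r *\<^sub>R X) = complex_of_real r * fc U a b X"
  by (simp add: fc_def scaleR_apply cinner_smult_right)
lemma fc_sum: "fc U a b (sum f S) = (\<Sum>x\<in>S. fc U a b (f x))"
  by (simp add: fc_def sum_apply cinner_sum_right)

lemma gc_sum: "gc U q (\<Sum>x\<in>F. c x *\<^sub>R x) = (\<Sum>x\<in>F. c x * gc U q x)"
  by (cases q) (simp add: gc_def fc_sum fc_scaleR Re_sum Im_sum)

lemma gc_Mb:
  assumes ON: "orthonormal_on {..<n} U" and kn: "k \<le> n"
    and p: "p \<in> Iset k n" and q: "q \<in> Iset k n"
  shows "gc U q (Mb U p) = (if p = q then 1 else 0)"
proof -
  obtain i j where pij: "p = (i,j)" by (cases p)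
  obtain a b where qab: "q = (a,b)" by (cases q)
  have idx: "i < n" "j < n" "a < n" "b < n"
    using p q kn by (auto simp: pij qab Iset_def)
  have fo: "fc U x y (outer (U z) (U w)) = (if x = z \<and> w = y then 1 else 0)"
    if "x < n" "y < n" "z < n" "w < n" for x y z w
    using fc_outer[OF ON] that by simp
  show ?thesis
    using idx unfolding pij qab
    by (auto simp: gc_def Mb_def fc_add fc_diff fc_csc fo)
qed

lemma Mb_indep:
  assumes ON: "orthonormal_on {..<n} U" and kn: "k \<le> n"
  shows "inj_on (Mb U) (Iset k n) \<and> independent (Mb U ` Iset k n)"
proof
  have fin: "finite (Iset k n)" by (simp add: Iset_def)
  show inj: "inj_on (Mb U) (Iset k n)"
  proof (rule inj_onI)
    fix p q assume p: "p \<in> Iset k n" and q: "q \<in> Iset k n" and e: "Mb U p = Mb U q"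
    have "gc U p (Mb U p) = 1" using gc_Mb[OF ON kn p p] by simp
    then have "gc U p (Mb U q) = 1" using e by simp
    then show "p = q" using gc_Mb[OF ON kn q p] by (auto split: if_splits)
  qed
  show "independent (Mb U ` Iset k n)"
  proof (rule real_vector.independent_if_scalars_zero)
    show "finite (Mb U ` Iset k n)" using fin by simp
  next
    fix f x assume s: "(\<Sum>x\<in>Mb U ` Iset k n. f x *\<^sub>R x) = 0" and x: "x \<in> Mb U ` Iset k n"
    then obtain q where q: "q \<in> Iset k n" and xq: "x = Mb U q" by auto
    have "0 = gc U q (\<Sum>x\<in>Mb U ` Iset k n. f x *\<^sub>R x)"
      using s by (cases q) (simp add: gc_def fc_def)
    also have "\<dots> = (\<Sum>y\<in>Mb U ` Iset k n. f y * gc U q y)" by (rule gc_sum)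
    also have "\<dots> = (\<Sum>p\<in>Iset k n. f (Mb U p) * gc U q (Mb U p))"
      by (rule sum.reindex[OF inj, unfolded comp_def])
    also have "\<dots> = (\<Sum>p\<in>Iset k n. if p = q then f (Mb U q) else 0)"
      by (rule sum.cong) (auto simp: gc_Mb[OF ON kn _ q])
    also have "\<dots> = f x" using q fin xq by simp
    finally show "f x = 0" by simp
  qed
qed

lemma card_Iset: "k \<le> n \<Longrightarrow> card (Iset k n) = k^2 + (n - k)^2"
proof -
  assume "k \<le> n"
  have "card (Iset k n) = card ({..<k} \<times> {..<k}) + card ({k..<n} \<times> {k..<n})"
    unfolding Iset_def by (rule card_Un_disjoint) auto
  then show ?thesis by (simp add: card_cartesian_product power2_eq_square)
qed

lemma mv_sum: "(A::complex^'n^'n) *v sum f S = (\<Sum>i\<in>S. A *v f i)"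
  by (induct S rule: infinite_finite_induct) (auto simp: matrix_vector_right_distrib)
lemma smult_sum: "(sum f S) *s (x::complex^'n) = (\<Sum>i\<in>S. f i *s x)"
  by (induct S rule: infinite_finite_induct) (auto simp: vector_sadd_rdistrib)

lemma basis_exp:
  assumes SU: "(\<Sum>a<n. outer (U a) (U a)) = mat 1"
  shows "y = (\<Sum>b<n. cinner (U b) y *s U b)"
proof -
  have "y = mat 1 *v y" by simp
  also have "\<dots> = (\<Sum>b<n. cinner (U b) y *s U b)"
    by (simp only: SU[symmetric] sum_apply outer_apply)
  finally show ?thesis .
qed

lemma expand:
  assumes SU: "(\<Sum>a<n. outer (U a) (U a)) = mat 1"
  shows "X = (\<Sum>a<n. \<Sum>b<n. csc (fc U a b X) (outer (U a) (U b)))"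
proof (subst matrix_eq, intro allI)
  fix z
  have c: "cinner (U a) (X *v z) = (\<Sum>b<n. cinner (U b) z * fc U a b X)" for a
  proof -
    have "X *v z = X *v (\<Sum>b<n. cinner (U b) z *s U b)" using basis_exp[OF SU, of z] by simp
    then show ?thesis by (simp add: mv_sum mv_smult cinner_sum_right cinner_smult_right fc_def)
  qed
  have "X *v z = (\<Sum>a<n. cinner (U a) (X *v z) *s U a)" by (rule basis_exp[OF SU])
  also have "\<dots> = (\<Sum>a<n. \<Sum>b<n. (fc U a b X * cinner (U b) z) *s U a)"
    by (simp add: c smult_sum mult.commute)
  also have "\<dots> = (\<Sum>a<n. \<Sum>b<n. csc (fc U a b X) (outer (U a) (U b))) *v z"
    by (simp add: sum_apply csc_apply outer_apply vector_smult_assoc)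
  finally show "X *v z = (\<Sum>a<n. \<Sum>b<n. csc (fc U a b X) (outer (U a) (U b))) *v z" .
qed

definition Tm :: "(nat \<Rightarrow> complex^'n) \<Rightarrow> nat \<Rightarrow> nat \<Rightarrow> complex \<Rightarrow> complex^'n^'n" where
  "Tm U a b z = csc z (outer (U a) (U b)) + csc (cnj z) (outer (U b) (U a))"

lemma herm_expand:
  assumes SU: "(\<Sum>a<n. outer (U a) (U a)) = mat 1" and hB: "cadj B = B"
  shows "B = (\<Sum>a<n. \<Sum>b<n. (1/2) *\<^sub>R Tm U a b (fc U a b B))"
proof -
  let ?E = "(\<Sum>a<n. \<Sum>b<n. csc (fc U a b B) (outer (U a) (U b)))"
  have e: "B = ?E" by (rule expand[OF SU])
  have ce: "cadj B = (\<Sum>a<n. \<Sum>b<n. csc (cnj (fc U a b B)) (outer (U b) (U a)))"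
    by (subst e) (simp add: cadj_sum cadj_csc cadj_outer)
  have "B = (1/2) *\<^sub>R (B + cadj B)" using hB by (simp add: scaleR_2[symmetric])
  also have "\<dots> = (1/2) *\<^sub>R (?E + (\<Sum>a<n. \<Sum>b<n. csc (cnj (fc U a b B)) (outer (U b) (U a))))"
    using e ce by simp
  also have "\<dots> = (\<Sum>a<n. \<Sum>b<n. (1/2) *\<^sub>R Tm U a b (fc U a b B))"
    by (simp only: Tm_def scaleR_add_right scaleR_sum_right sum.distrib)
  finally show ?thesis .
qed

lemma scalar_id: "z * x + cnj z * y = complex_of_real (Re z) * (x + y) + complex_of_real (Im z) * (\<i> * (x - y))"
proof -
  have z: "z = complex_of_real (Re z) + \<i> * complex_of_real (Im z)" by (simp add: complex_eq_iff)
  have cz: "cnj z = complex_of_real (Re z) - \<i> * complex_of_real (Im z)" by (simp add: complex_eq_iff)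
  show ?thesis by (subst z, subst cz) (simp add: algebra_simps)
qed

lemma Tm_id: "csc z X + csc (cnj z) Y = Re z *\<^sub>R (X + Y) + Im z *\<^sub>R csc \<i> (X - Y)"
  by (simp add: vec_eq_iff csc_def scalar_id cscaleR)

lemma csc0: "csc c 0 = 0"
  by (simp add: vec_eq_iff csc_def)

lemma csc_swap: "csc \<i> (X - Y) = - csc \<i> (Y - X)"
  by (simp add: vec_eq_iff csc_def algebra_simps)

lemma Tm_span:
  assumes "(a,b) \<in> Iset k n"
  shows "Tm U a b z \<in> span (Mb U ` Iset k n)"
proof -
  have ab: "(a,b) \<in> Iset k n" "(b,a) \<in> Iset k n" using assms by (auto simp: Iset_def)
  have m1: "Mb U (a,b) \<in> span (Mb U ` Iset k n)" "Mb U (b,a) \<in> span (Mb U ` Iset k n)"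
    using ab by (auto intro: span_base)
  consider "a = b" | "a < b" | "b < a" by linarith
  then show ?thesis
  proof cases
    case 1
    have "Tm U a b z = Re z *\<^sub>R (Mb U (a,b) + Mb U (a,b)) + Im z *\<^sub>R csc \<i> (Mb U (a,b) - Mb U (a,b))"
      unfolding Tm_def Tm_id Mb_def using 1 by simp
    also have "\<dots> = Re z *\<^sub>R Mb U (a,b) + Re z *\<^sub>R Mb U (a,b)"
      by (simp only: diff_self csc0 scaleR_zero_right add_0_right scaleR_add_right)
    finally show ?thesis using m1 by (metis span_scale span_add)
  next
    case 2
    then have "Tm U a b z = Re z *\<^sub>R Mb U (a,b) + Im z *\<^sub>R Mb U (b,a)"
      by (simp add: Tm_def Tm_id Mb_def)
    then show ?thesis using m1 by (simp add: span_scale span_add)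
  next
    case 3
    then have "Tm U a b z = Re z *\<^sub>R Mb U (b,a) - Im z *\<^sub>R Mb U (a,b)"
      by (simp add: Tm_def Tm_id Mb_def add.commute csc_swap[of "outer (U a) (U b)"])
    then show ?thesis using m1 by (simp add: span_scale span_diff)
  qed
qed

lemma span_V:
  assumes SU: "(\<Sum>a<n. outer (U a) (U a)) = mat 1" and kn: "k \<le> n"
    and hB: "cadj B = B"
    and cross: "\<And>a b. a < n \<Longrightarrow> b < n \<Longrightarrow> (a < k \<longleftrightarrow> b < k) \<or> fc U a b B = 0"
  shows "B \<in> span (Mb U ` Iset k n)"
proof -
  have "(\<Sum>a<n. \<Sum>b<n. (1/2) *\<^sub>R Tm U a b (fc U a b B)) \<in> span (Mb U ` Iset k n)"
  proof (intro span_sum)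
    fix a b assume a: "a \<in> {..<n}" and b: "b \<in> {..<n}"
    show "(1/2) *\<^sub>R Tm U a b (fc U a b B) \<in> span (Mb U ` Iset k n)"
    proof (cases "(a < k \<longleftrightarrow> b < k)")
      case True
      then have "(a,b) \<in> Iset k n" using a b kn by (auto simp: Iset_def)
      then show ?thesis by (intro span_scale Tm_span)
    next
      case False
      then have "fc U a b B = 0" using cross a b by auto
      then show ?thesis by (simp add: Tm_def csc_def span_zero vec_eq_iff zero_vec_def[symmetric])
    qed
  qed
  then show ?thesis using herm_expand[OF SU hB] by simp
qed

lemma mult_outer_l: "(A::complex^'n^'n) ** outer x y = outer (A *v x) y"
  by (simp add: outer_def matrix_matrix_mult_def matrix_vector_mult_def vec_eq_iff sum_distrib_left mult_ac)
lemma mult_outer_r: "outer x y ** (A::complex^'n^'n) = outer x (cadj A *v y)"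
  by (simp add: outer_def cadj_def matrix_matrix_mult_def matrix_vector_mult_def vec_eq_iff
      sum_distrib_left mult_ac)
lemma csc_mult: "csc c X ** (A::complex^'n^'n) = csc c (X ** A)"
  by (simp add: csc_def matrix_matrix_mult_def vec_eq_iff sum_distrib_left mult_ac)
lemma outer_zero[simp]: "outer 0 y = 0" "outer x 0 = 0"
  by (simp_all add: outer_def vec_eq_iff)

lemma id1: "outer x y + outer y x = outer (x+y) (x+y) - outer x x - outer y y"
  by (simp add: outer_def vec_eq_iff algebra_simps)
lemma id2: "csc \<i> (outer y x - outer x y) = outer (x + \<i> *s y) (x + \<i> *s y) - outer x x - outer y y"
  by (simp add: outer_def csc_def vec_eq_iff algebra_simps)

lemma sum_split_nat: "(\<Sum>a<k+m. f a) = (\<Sum>a<k. f a) + (\<Sum>b<m. f (k+b))" for k m :: nat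
  by (induction m) (simp_all add: add.assoc)

lemma proj_compl: "orth_proj P \<Longrightarrow> orth_proj (mat 1 - P)"
  by (simp add: orth_proj_def cadj_diff mm_diff_l mm_diff_r)

context
  fixes P :: "complex^'n^'n" and k :: nat
  assumes k1: "1 \<le> k" and kn: "k < CARD('n)" and Pp: "orth_proj P" and trP: "trace P = of_nat k"
begin

lemma csc_neg_i: "csc (- \<i>) (X - Y) = csc \<i> (Y - X)"
  by (simp add: vec_eq_iff csc_def algebra_simps)

definition goodU :: "(nat \<Rightarrow> complex^'n) \<Rightarrow> bool" where
  "goodU U \<longleftrightarrow> orthonormal_on {..<CARD('n)} U \<and> (\<Sum>a<CARD('n). outer (U a) (U a)) = mat 1
     \<and> P = (\<Sum>a<k. outer (U a) (U a))
     \<and> (\<forall>a<k. P *v U a = U a) \<and> (\<forall>a. k \<le> a \<and> a < CARD('n) \<longrightarrow> P *v U a = 0)"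

lemma hP: "cadj P = P" "P ** P = P" using Pp by (auto simp: orth_proj_def)

lemma exists_U: "\<exists>U. goodU U"
proof -
  let ?n = "CARD('n)"
  obtain u where u: "orthonormal_on {..<k} u" and Pu: "P = (\<Sum>i<k. outer (u i) (u i))"
    using proj_decomp[OF Pp trP] by blast
  have Qp: "orth_proj (mat 1 - P)" by (rule proj_compl[OF Pp])
  have "trace (mat 1 - P) = of_nat (?n - k)"
    using kn by (simp add: trace_sub trace_I trP of_nat_diff)
  then obtain v where v: "orthonormal_on {..<?n - k} v" and Qv: "mat 1 - P = (\<Sum>i<?n-k. outer (v i) (v i))"
    using proj_decomp[OF Qp] by blast
  define U where "U i = (if i < k then u i else v (i - k))" for i
  have Puu: "P *v u i = u i" if "i < k" for i
    using sum_outer_apply[OF u _ ] that by (simp add: Pu)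
  have Pvv: "P *v v j = 0" if "j < ?n - k" for j
  proof -
    have "(mat 1 - P) *v v j = v j" using sum_outer_apply[OF v _ ] that by (simp add: Qv)
    then show ?thesis by (simp add: matrix_vector_mult_diff_rdistrib)
  qed
  have uv: "cinner (u i) (v j) = 0" if "i < k" "j < ?n - k" for i j
  proof -
    have "cinner (u i) (v j) = cinner (P *v u i) (v j)" using Puu[OF that(1)] by simp
    also have "\<dots> = cinner (u i) (P *v v j)" by (simp add: cinner_adj hP)
    finally show ?thesis using Pvv[OF that(2)] by simp
  qed
  have vu: "cinner (v j) (u i) = 0" if "i < k" "j < ?n - k" for i j
    using uv[OF that] by (metis cinner_cnj complex_cnj_zero)
  have ON: "orthonormal_on {..<?n} U"
    unfolding orthonormal_on_def
  proof (intro ballI)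
    fix a b assume a: "a \<in> {..<?n}" and b: "b \<in> {..<?n}"
    show "cinner (U a) (U b) = (if a = b then 1 else 0)"
    proof (cases "a < k")
      case True
      show ?thesis
      proof (cases "b < k")
        case True
        then show ?thesis using \<open>a < k\<close> u by (simp add: U_def orthonormal_on_def)
      next
        case False
        then show ?thesis using \<open>a < k\<close> b uv[of a "b - k"] by (auto simp: U_def)
      qed
    next
      case False
      show ?thesis
      proof (cases "b < k")
        case True
        then show ?thesis using \<open>\<not> a < k\<close> a vu[of b "a - k"] by (auto simp: U_def)
      next
        case False
        then have "cinner (v (a - k)) (v (b - k)) = (if a - k = b - k then 1 else 0)"
          using \<open>\<not> a < k\<close> a b v by (auto simp: orthonormal_on_def)
        then show ?thesis using False \<open>\<not> a < k\<close> by (auto simp: U_def)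
      qed
    qed
  qed
  have P1: "P = (\<Sum>a<k. outer (U a) (U a))" unfolding Pu by (rule sum.cong) (auto simp: U_def)
  have "(\<Sum>a<?n. outer (U a) (U a)) = (\<Sum>a<k + (?n - k). outer (U a) (U a))" using kn by simp
  also have "\<dots> = P + (\<Sum>b<?n - k. outer (v b) (v b))"
    by (simp only: sum_split_nat P1) (simp add: U_def)
  also have "\<dots> = mat 1" by (simp add: Qv[symmetric])
  finally have SU: "(\<Sum>a<?n. outer (U a) (U a)) = mat 1" .
  have "\<forall>a<k. P *v U a = U a" using Puu by (simp add: U_def)
  moreover have "\<forall>a. k \<le> a \<and> a < ?n \<longrightarrow> P *v U a = 0" using Pvv by (auto simp: U_def)
  ultimately show ?thesis using ON SU P1 unfolding goodU_def by blast
qed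

lemma trPQ:
  assumes U: "goodU U" and Q: "orth_proj Q"
  shows "\<exists>r. trace (P ** Q) = complex_of_real r \<and> 0 \<le> r \<and> r \<le> real k"
proof -
  have ON: "orthonormal_on {..<CARD('n)} U" and P1: "P = (\<Sum>a<k. outer (U a) (U a))"
    using U by (auto simp: goodU_def)
  have n1: "nsq (U a) = 1" if "a < k" for a
  proof -
    have "cinner (U a) (U a) = 1" using ON that kn by (simp add: orthonormal_on_def)
    then show ?thesis by (simp add: cinner_self)
  qed
  have "trace (P ** Q) = trace (Q ** P)" by (rule trace_mul_sym)
  also have "\<dots> = (\<Sum>a<k. complex_of_real (nsq (Q *v U a)))"
    by (simp add: P1 mult_sum trace_sum trace_outer proj_quad[OF Q])
  finally have e: "trace (P ** Q) = complex_of_real (\<Sum>a<k. nsq (Q *v U a))" by simp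
  have "(\<Sum>a<k. nsq (Q *v U a)) \<le> (\<Sum>a<k. 1)"
    by (rule sum_mono) (metis proj_nsq_le[OF Q] n1 lessThan_iff)
  then show ?thesis using e by (intro exI[of _ "\<Sum>a<k. nsq (Q *v U a)"]) (auto intro: sum_nonneg nsq_nonneg)
qed

lemma in_S1:
  assumes U: "goodU U" and x: "P *v x = x"
  shows "P + outer x x \<in> SH k P"
  unfolding SH_iff[OF Pp trP]
proof (intro conjI allI impI)
  show "P + outer x x \<in> Herm" by (simp add: Herm_def hermitian_def cadj_add cadj_outer hP)
  have e: "trace ((P + outer x x) ** P) = complex_of_real (real k + nsq x)"
    by (simp add: mm_add_r trace_add hP trP trace_mul_sym[of "outer x x"] trace_outer x cinner_self)
  then show "Im (trace ((P + outer x x) ** P)) = 0" by simp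
  fix Q :: "complex^'n^'n" assume Q: "orth_proj Q \<and> trace Q = of_nat k"
  obtain r where r: "trace (P ** Q) = complex_of_real r" "0 \<le> r" "r \<le> real k"
    using trPQ[OF U] Q by blast
  have "trace ((P + outer x x) ** Q) = complex_of_real (r + nsq (Q *v x))"
    using Q by (simp add: mm_add_r trace_add r trace_mul_sym[of "outer x x"] trace_outer proj_quad)
  then have c: "cmod (trace ((P + outer x x) ** Q)) = \<bar>r + nsq (Q *v x)\<bar>"
    by (simp only: norm_of_real)
  have d: "Re (trace ((P + outer x x) ** P)) = real k + nsq x"
    unfolding e by (rule Re_complex_of_real)
  have "nsq (Q *v x) \<le> nsq x" using Q proj_nsq_le by blast
  then show "cmod (trace ((P + outer x x) ** Q)) \<le> Re (trace ((P + outer x x) ** P))"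
    using c d r nsq_nonneg[of "Q *v x"] by simp
qed

lemma in_S2:
  assumes U: "goodU U" and x: "P *v x = 0"
  shows "nsq x *\<^sub>R P - outer x x \<in> SH k P"
  unfolding SH_iff[OF Pp trP]
proof (intro conjI allI impI)
  show "nsq x *\<^sub>R P - outer x x \<in> Herm"
    by (simp add: Herm_def hermitian_def cadj_diff cadj_scaleR cadj_outer hP)
  have e: "trace ((nsq x *\<^sub>R P - outer x x) ** P) = complex_of_real (nsq x * real k)"
    by (simp add: mm_diff_r trace_sub scalar_matrix_assoc[symmetric] trace_scaleR hP trP
        trace_mul_sym[of "outer x x"] trace_outer x)
  then show "Im (trace ((nsq x *\<^sub>R P - outer x x) ** P)) = 0" by simp
  fix Q :: "complex^'n^'n" assume Q: "orth_proj Q \<and> trace Q = of_nat k"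
  obtain r where r: "trace (P ** Q) = complex_of_real r" "0 \<le> r" "r \<le> real k"
    using trPQ[OF U] Q by blast
  have t: "trace ((nsq x *\<^sub>R P - outer x x) ** Q) = complex_of_real (nsq x * r - nsq (Q *v x))"
    using Q by (simp add: mm_diff_r trace_sub scalar_matrix_assoc[symmetric] trace_scaleR r
        trace_mul_sym[of "outer x x"] trace_outer proj_quad)
  have q: "nsq (Q *v x) \<le> nsq x" "0 \<le> nsq (Q *v x)" using Q proj_nsq_le nsq_nonneg by blast+
  have N: "0 \<le> nsq x" by (rule nsq_nonneg)
  have a: "nsq x * r \<le> nsq x * real k" using N r by (intro mult_left_mono) auto
  have b: "nsq x \<le> nsq x * real k" using N k1 by (simp add: mult_le_cancel_left1)
  have c: "0 \<le> nsq x * r" using N r by simp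
  have "\<bar>nsq x * r - nsq (Q *v x)\<bar> \<le> nsq x * real k" using a b c q by linarith
  moreover have "cmod (trace ((nsq x *\<^sub>R P - outer x x) ** Q)) = \<bar>nsq x * r - nsq (Q *v x)\<bar>"
    unfolding t by (rule norm_of_real)
  moreover have "Re (trace ((nsq x *\<^sub>R P - outer x x) ** P)) = nsq x * real k"
    unfolding e by (rule Re_complex_of_real)
  ultimately show "cmod (trace ((nsq x *\<^sub>R P - outer x x) ** Q)) \<le> Re (trace ((nsq x *\<^sub>R P - outer x x) ** P))"
    by simp
qed

lemma outer_in_span:
  assumes U: "goodU U" and x: "P *v x = x \<or> P *v x = 0"
  shows "outer x x \<in> span (SH k P)"
  using x
proof
  assume x: "P *v x = x"
  have "P + outer x x \<in> SH k P" by (rule in_S1[OF U x])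
  moreover have "P \<in> SH k P" using in_S1[OF U, of 0] by simp
  ultimately have "(P + outer x x) - P \<in> span (SH k P)" by (intro span_diff span_base)
  then show ?thesis by simp
next
  assume x: "P *v x = 0"
  have "nsq x *\<^sub>R P - outer x x \<in> SH k P" by (rule in_S2[OF U x])
  moreover have "P \<in> SH k P" using in_S1[OF U, of 0] by simp
  ultimately have "nsq x *\<^sub>R P - (nsq x *\<^sub>R P - outer x x) \<in> span (SH k P)"
    by (intro span_diff span_scale span_base)
  then show ?thesis by simp
qed

lemma Mb_in_span:
  assumes U: "goodU U" and p: "p \<in> Iset k CARD('n)"
  shows "Mb U p \<in> span (SH k P)"
proof -
  obtain i j where pij: "p = (i,j)" by (cases p)
  have PU: "\<forall>a<k. P *v U a = U a" "\<forall>a. k \<le> a \<and> a < CARD('n) \<longrightarrow> P *v U a = 0"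
    using U by (auto simp: goodU_def)
  have blk: "(P *v U i = U i \<and> P *v U j = U j) \<or> (P *v U i = 0 \<and> P *v U j = 0)"
    using p PU by (auto simp: pij Iset_def)
  have comb: "P *v (U i + c *s U j) = U i + c *s U j \<or> P *v (U i + c *s U j) = 0" for c
    using blk by (auto simp: matrix_vector_right_distrib mv_smult)
  have sI: "outer (U i) (U i) \<in> span (SH k P)" "outer (U j) (U j) \<in> span (SH k P)"
    using blk by (auto intro!: outer_in_span[OF U])
  have s1: "outer (U i + U j) (U i + U j) \<in> span (SH k P)"
    using outer_in_span[OF U comb[of 1]] by simp
  have s2: "outer (U i + \<i> *s U j) (U i + \<i> *s U j) \<in> span (SH k P)"
    by (rule outer_in_span[OF U comb[of \<i>]])
  show ?thesis
    unfolding pij Mb_def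
    using sI s1 s2 by (auto simp: id1 id2 intro!: span_diff)
qed

definition V :: "(complex^'n^'n) set" where "V = {B \<in> Herm. B ** P = P ** B}"

lemma subspace_V: "subspace V"
  unfolding subspace_def V_def
  by (auto simp: herm_0 herm_add herm_scaleR mm_add_r matrix_add_ldistrib
      scalar_matrix_assoc[symmetric] matrix_scalar_ac)

lemma Mb_in_V:
  assumes U: "goodU U" and p: "p \<in> Iset k CARD('n)"
  shows "Mb U p \<in> V"
proof -
  obtain i j where pij: "p = (i,j)" by (cases p)
  have PU: "\<forall>a<k. P *v U a = U a" "\<forall>a. k \<le> a \<and> a < CARD('n) \<longrightarrow> P *v U a = 0"
    using U by (auto simp: goodU_def)
  have blk: "(P *v U i = U i \<and> P *v U j = U j) \<or> (P *v U i = 0 \<and> P *v U j = 0)"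
    using p PU by (auto simp: pij Iset_def)
  have c1: "P ** outer (U a) (U b) = outer (U a) (U b) ** P" if "a \<in> {i,j}" "b \<in> {i,j}" for a b
    using blk that by (auto simp: mult_outer_l mult_outer_r hP)
  show ?thesis
    unfolding V_def pij Mb_def
    using c1
    by (auto simp: Herm_def hermitian_def cadj_add cadj_csc cadj_diff cadj_outer
        matrix_add_ldistrib mm_add_r mm_diff_l mm_diff_r mult_csc csc_mult csc_neg_i)
qed

lemma V_in_span:
  assumes U: "goodU U" and B: "B \<in> V"
  shows "B \<in> span (Mb U ` Iset k CARD('n))"
proof -
  have SU: "(\<Sum>a<CARD('n). outer (U a) (U a)) = mat 1"
    and PU: "\<forall>a<k. P *v U a = U a" "\<forall>a. k \<le> a \<and> a < CARD('n) \<longrightarrow> P *v U a = 0"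
    using U by (auto simp: goodU_def)
  have hB: "cadj B = B" and cB: "B ** P = P ** B" using B by (auto simp: V_def Herm_def hermitian_def)
  have key: "cinner (U a) (B *v (P *v U b)) = cinner (P *v U a) (B *v U b)" for a b
  proof -
    have "cinner (U a) (B *v (P *v U b)) = cinner (U a) ((B ** P) *v U b)"
      by (simp add: matrix_vector_mul_assoc)
    also have "\<dots> = cinner (U a) (P *v (B *v U b))" by (simp add: cB matrix_vector_mul_assoc)
    also have "\<dots> = cinner (P *v U a) (B *v U b)" by (simp add: cinner_adj hP)
    finally show ?thesis .
  qed
  show ?thesis
  proof (rule span_V[OF SU _ hB])
    show "k \<le> CARD('n)" using kn by simp
  next
    fix a b assume a: "a < CARD('n)" and b: "b < CARD('n)"
    show "(a < k \<longleftrightarrow> b < k) \<or> fc U a b B = 0"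
    proof (cases "a < k \<longleftrightarrow> b < k")
      case False
      then consider "a < k" "\<not> b < k" | "\<not> a < k" "b < k" by blast
      then have "fc U a b B = 0"
      proof cases
        case 1
        then show ?thesis using key[of a b] PU a b by (simp add: fc_def)
      next
        case 2
        then show ?thesis using key[of a b] PU a b by (simp add: fc_def)
      qed
      then show ?thesis by simp
    qed simp
  qed
qed

lemma SH_sub_V: "SH k P \<subseteq> V"
  using SH_commute[OF Pp trP] by (auto simp: V_def SH_def)

end

theorem mainTheorem9:
  fixes P :: "complex^'n^'n" and k :: nat
  assumes "1 \<le> k" and "k < CARD('n)"
    and "orth_proj P" and "trace P = of_nat k"
  shows "convex_cone (SH k P)
    \<and> dim (span (SH k P)) = k^2 + (CARD('n) - k)^2
    \<and> SH k P = {B \<in> Herm. B ** P = P ** B \<and> trace (P ** B ** P) = complex_of_real (wk k B)}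
    \<and> span (SH k P) = {B \<in> Herm. B ** P = P ** B}"
proof -
  note A = assms
  obtain U where U: "goodU P k U" using exists_U[OF A] by blast
  have kn: "k \<le> CARD('n)" using A(2) by simp
  have ON: "orthonormal_on {..<CARD('n)} U" using U unfolding goodU_def[OF A] by blast
  have ind: "inj_on (Mb U) (Iset k CARD('n)) \<and> independent (Mb U ` Iset k CARD('n))"
    by (rule Mb_indep[OF ON kn])
  have VS: "V P = span (Mb U ` Iset k CARD('n))"
  proof
    show "V P \<subseteq> span (Mb U ` Iset k CARD('n))" using V_in_span[OF A U] by blast
    show "span (Mb U ` Iset k CARD('n)) \<subseteq> V P"
      by (rule span_minimal) (use Mb_in_V[OF A U] subspace_V[OF A] in auto)
  qed
  have spanS: "span (SH k P) = V P"
  proof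
    show "span (SH k P) \<subseteq> V P" by (rule span_minimal[OF SH_sub_V[OF A] subspace_V[OF A]])
    have "span (Mb U ` Iset k CARD('n)) \<subseteq> span (SH k P)"
      by (rule span_minimal) (use Mb_in_span[OF A U] subspace_span in auto)
    then show "V P \<subseteq> span (SH k P)" using VS by simp
  qed
  have "dim (span (SH k P)) = dim (span (Mb U ` Iset k CARD('n)))" using spanS VS by simp
  also have "\<dots> = card (Mb U ` Iset k CARD('n))"
    using ind real_vector.dim_span_eq_card_independent by blast
  also have "\<dots> = card (Iset k CARD('n))" using ind by (simp add: card_image)
  also have "\<dots> = k^2 + (CARD('n) - k)^2" by (rule card_Iset[OF kn])
  finally have dimS: "dim (span (SH k P)) = k^2 + (CARD('n) - k)^2" .
  have tr: "trace (P ** B ** P) = trace (B ** P)" if "B ** P = P ** B" for B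
  proof -
    have "P ** B ** P = B ** P ** P" using that by simp
    also have "\<dots> = B ** P" by (simp add: matrix_mul_assoc[symmetric] hP[OF A])
    finally show ?thesis by simp
  qed
  have SHe: "SH k P = {B \<in> Herm. B ** P = P ** B \<and> trace (P ** B ** P) = complex_of_real (wk k B)}"
  proof (intro set_eqI iffI)
    fix B assume B: "B \<in> SH k P"
    then have c: "B ** P = P ** B" by (rule SH_commute[OF A(3,4)])
    then show "B \<in> {B \<in> Herm. B ** P = P ** B \<and> trace (P ** B ** P) = complex_of_real (wk k B)}"
      using B tr[OF c] by (auto simp: SH_def)
  next
    fix B assume B: "B \<in> {B \<in> Herm. B ** P = P ** B \<and> trace (P ** B ** P) = complex_of_real (wk k B)}"
    then show "B \<in> SH k P" using tr by (auto simp: SH_def)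
  qed
  have spanS': "span (SH k P) = {B \<in> Herm. B ** P = P ** B}" using spanS by (simp add: V_def[OF A])
  show ?thesis
    by (intro conjI) (rule SH_convex_cone[OF A(3,4)], rule dimS, rule SHe, rule spanS')
qed

end
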